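(* Let $k>1$ be an integer with $k\in\mathcal C_1$. Then $$2^k-1<a_k<2^{k+1}-1.$$ In particular $c_k/2^k\to0$ as $k\to\infty$ through $\mathcal C_1$. Furthermore, let $t_k$ be the multiplicative order of $2$ modulo $k$ and let $j_0\in\{0,1,\ldots,t_k-1\}$ be the (unique) integer with $2^{k+1}-1\equiv 2^{j_0}\pmod k$; put $s=\lfloor (k-1-j_0)/t_k\rfloor$ and $j_1=j_0+st_k$. Then $$a_k=2^{k+1}-1-2^{j_1}.$$
   Context: For a positive integer $k$, $a_k$ is the smallest positive multiple of $k$ whose sum of binary digits equals $k$, and $c_k=a_k/k$. For a positive integer $m$, $\mathcal C_m$ is the set of odd positive integers $k$ for which there exist integers $0\le j_1<j_2<\cdots<j_m\le m+k-2$ with $2^{k+m}-1\equiv \sum_{i=1}^m 2^{j_i}\pmod k$. *)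

theory Defs
  imports "HOL-Analysis.Analysis" "HOL-Number_Theory.Pocklington"
begin

fun bitsum :: "nat \<Rightarrow> nat" where
  "bitsum 0 = 0"
| "bitsum (Suc n) = Suc n mod 2 + bitsum (Suc n div 2)"

definition a_seq :: "nat \<Rightarrow> nat" where
  "a_seq k = (LEAST n. n > 0 \<and> k dvd n \<and> bitsum n = k)"

definition c_seq :: "nat \<Rightarrow> real" where
  "c_seq k = real (a_seq k) / real k"

text \<open>C m: odd positive k admitting exponents 0 \<le> j_1 < ... < j_m \<le> m + k - 2
  (encoded as a set J of m distinct exponents) with
  2^(k+m) - 1 = sum of 2^j over J  (mod k).\<close>
definition C_set :: "nat \<Rightarrow> nat set" where
  "C_set m = {k. odd k \<and> k > 0 \<and>
     (\<exists>J. J \<subseteq> {0..m + k - 2} \<and> card J = m \<and>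
        [2^(k+m) - 1 = (\<Sum>j\<in>J. 2^j)] (mod k))}"

end

theory Submission imports Defs begin

lemma bitsum_rec: "bitsum n = n mod 2 + bitsum (n div 2)"
  by (cases n) auto

lemma aux1: "(n::nat) < 2*P \<Longrightarrow> (2*P-1-n) div 2 = P - 1 - n div 2 \<and> (2*P-1-n) mod 2 = 1 - n mod 2"
proof -
  assume h: "n < 2*P"
  define q r where "q = n div 2" and "r = n mod 2"
  have n: "n = 2*q + r" and r: "r < 2" unfolding q_def r_def by auto
  have "q < P" using h n by linarith
  hence e: "2*P-1-n = 2*(P-1-q) + (1-r)" using n r by linarith
  have "r = 0 \<or> r = 1" using r by auto
  hence "(2*(P-1-q) + (1-r)) div 2 = P-1-q \<and> (2*(P-1-q) + (1-r)) mod 2 = 1-r" by auto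
  thus ?thesis using e unfolding q_def r_def by simp
qed

lemma bitsum_compl: "n < 2^m \<Longrightarrow> bitsum (2^m - 1 - n) + bitsum n = m"
proof (induction m arbitrary: n)
  case 0 then show ?case by simp
next
  case (Suc m)
  have h: "n < 2 * 2^m" using Suc.prems by simp
  have "n div 2 < 2^m" using h by simp
  note IH = Suc.IH[OF this]
  have "bitsum (2^Suc m - 1 - n) = (1 - n mod 2) + bitsum (2^m - 1 - n div 2)"
    using aux1[OF h] bitsum_rec[of "2 * 2 ^ m - 1 - n"] by simp
  moreover have "bitsum n = n mod 2 + bitsum (n div 2)" by (rule bitsum_rec)
  moreover have "n mod 2 \<le> 1" by simp
  ultimately show ?case using IH by simp
qed

lemma bitsum_0: "bitsum n = 0 \<longleftrightarrow> n = 0"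
proof (induction n rule: less_induct)
  case (less n)
  show ?case
  proof (cases "n = 0")
    case False
    have r: "bitsum n = n mod 2 + bitsum (n div 2)" by (rule bitsum_rec)
    have "bitsum n \<noteq> 0"
    proof
      assume "bitsum n = 0"
      hence "n mod 2 = 0" "bitsum (n div 2) = 0" using r by auto
      moreover have "n div 2 < n" using False by simp
      ultimately have "n div 2 = 0" using less.IH by blast
      with \<open>n mod 2 = 0\<close> False show False by presburger
    qed
    with False show ?thesis by simp
  qed simp
qed

lemma bitsum_pow2: "bitsum (2^j) = 1"
proof (induction j)
  case 0 then show ?case by simp
next
  case (Suc j) then show ?case using bitsum_rec[of "2^Suc j"] by simp
qed

lemma bitsum_1: "bitsum n = 1 \<Longrightarrow> \<exists>j. n = 2^j"
proof (induction n rule: less_induct)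
  case (less n)
  have r: "bitsum n = n mod 2 + bitsum (n div 2)" by (rule bitsum_rec)
  show ?case
  proof (cases "n mod 2 = 0")
    case True
    hence b: "bitsum (n div 2) = 1" using r less.prems by simp
    hence "n div 2 \<noteq> 0" by (metis bitsum.simps(1) zero_neq_one)
    hence "n div 2 < n" by simp
    then obtain j where "n div 2 = 2^j" using less.IH b by blast
    hence "n = 2^Suc j" using True by (metis mult_div_mod_eq add_0_right mult.commute power_Suc)
    thus ?thesis by blast
  next
    case False
    hence "bitsum (n div 2) = 0" using r less.prems by simp
    hence "n div 2 = 0" using bitsum_0 by simp
    hence "n = 1" using False by presburger
    hence "n = 2^0" by simp
    thus ?thesis by blast
  qed
qed

lemma not_dvd_pow: assumes "(k::nat) > 1" shows "\<not> k dvd 2^k - 1"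
proof
  assume kd: "k dvd 2^k - 1"
  define p where "p = (LEAST p. prime p \<and> p dvd k)"
  obtain p0 where "prime p0" "p0 dvd k" using prime_factor_nat[of k] assms by auto
  hence pp: "prime p \<and> p dvd k" using LeastI[of "\<lambda>p. prime p \<and> p dvd k" p0] unfolding p_def by blast
  have pk: "p dvd 2^k - 1" using pp kd dvd_trans by blast
  have p1: "p > 1" using pp prime_gt_1_nat by blast
  have c1: "[2^k = 1] (mod p)" using pk by (simp add: cong_altdef_nat)
  have "odd (2^k - 1::nat)" using assms by simp
  have "odd p"
  proof
    assume "even p"
    hence "2 dvd (2^k - 1::nat)" using pk by (rule dvd_trans)
    thus False using \<open>odd (2^k - 1::nat)\<close> by simp
  qed
  have cop: "coprime p 2" proof -
    have "\<not> p dvd 2"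
    proof
      assume "p dvd 2"
      hence "p \<le> 2" by (rule dvd_imp_le) simp
      hence "p = 2" using p1 by simp
      thus False using \<open>odd p\<close> by simp
    qed
    thus ?thesis using prime_imp_coprime[of p 2] pp by blast
  qed
  have d1: "ord p 2 dvd k" using ord_divides[THEN iffD1, OF c1] .
  have d2: "ord p 2 dvd p - 1" using order_divides_totient[OF cop] totient_prime pp by simp
  have "p \<noteq> 2" using \<open>odd p\<close> by auto
  hence "p > 2" using p1 by simp
  hence "2 mod p = 2" by simp
  hence "ord p 2 \<noteq> 1" using ord_eq_Suc_0_iff[of p 2] by (simp add: cong_def)
  moreover have "ord p 2 > 0" using cop by simp
  ultimately obtain q where q: "prime q" "q dvd ord p 2" using prime_factor_nat by blast
  have "q dvd k" using q d1 dvd_trans by blast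
  moreover have "q < p" proof -
    have "q dvd p - 1" using q d2 dvd_trans by blast
    moreover have "p - 1 > 0" using p1 by simp
    ultimately have "q \<le> p - 1" by (rule dvd_imp_le)
    thus ?thesis using p1 by simp
  qed
  ultimately have "prime q \<and> q dvd k" "q < (LEAST p. prime p \<and> p dvd k)" using q(1) unfolding p_def by auto
  thus False using not_less_Least by blast
qed

lemma C1_elem:
  assumes "k > 1" "k \<in> C_set 1"
  shows "odd k \<and> (\<exists>j. j \<le> k-1 \<and> [2^(k+1)-1 = 2^j] (mod k))"
proof -
  from assms(2) obtain J where o: "odd k" and J: "J \<subseteq> {0..1 + k - 2}" "card J = 1"
    "[2^(k+1) - 1 = (\<Sum>j\<in>J. 2^j)] (mod k)" unfolding C_set_def by auto
  from J(2) obtain j where Jj: "J = {j}" by (rule card_1_singletonE)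
  have "j \<le> k - 1" using J(1) Jj assms(1) by auto
  moreover have "[2^(k+1)-1 = 2^j] (mod k)" using J(3) Jj by simp
  ultimately show ?thesis using o by blast
qed

lemma odd_coprime2: "odd (k::nat) \<Longrightarrow> coprime k 2"
  using prime_imp_coprime[OF two_is_prime_nat, of k] by (simp add: coprime_commute)

lemma exp_cong:
  assumes "odd (k::nat)" "[2^i = 2^j] (mod k)" "j < ord k 2"
  shows "i mod ord k 2 = j"
proof -
  have "[i = j] (mod ord k 2)" using order_divides_expdiff[OF odd_coprime2[OF assms(1)]] assms(2) by blast
  thus ?thesis using assms(3) by (simp add: cong_def)
qed

lemma exp_cong': "odd (k::nat) \<Longrightarrow> i mod ord k 2 = j mod ord k 2 \<Longrightarrow> [2^i = 2^j] (mod k)"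
  using order_divides_expdiff[OF odd_coprime2] by (simp add: cong_def)

lemma cong_sub_lemma:
  assumes "n + x = (M::nat)" "k dvd n"
  shows "[x = M] (mod k)"
proof -
  have "[n + x = x] (mod k)" using assms(2) by (simp add: cong_add_rcancel_0_nat cong_0_iff)
  thus ?thesis using assms(1) by (simp add: cong_sym)
qed

lemma cong_sub_lemma2:
  assumes "n + x = (M::nat)" "[x = M] (mod k)"
  shows "k dvd n"
proof -
  have "[n + x = x] (mod k)" using assms by (metis cong_sym)
  hence "[n = 0] (mod k)" by (simp add: cong_add_rcancel_0_nat)
  thus ?thesis by (simp add: cong_0_iff)
qed

lemma main_formula:
  assumes k1: "k > 1" and kC: "k \<in> C_set 1" and j0: "j0 < ord k 2" "[2^(k+1)-1 = 2^j0] (mod k)"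
  shows "a_seq k = 2^(k+1)-1-2^(j0 + ((k-1-j0) div ord k 2) * ord k 2)
     \<and> j0 + ((k-1-j0) div ord k 2) * ord k 2 \<le> k - 1"
proof -
  obtain j where ok: "odd k" and j: "j \<le> k-1" "[2^(k+1)-1 = 2^j] (mod k)" using C1_elem[OF k1 kC] by blast
  define t where "t = ord k 2"
  have t0: "t > 0" unfolding t_def using odd_coprime2[OF ok] by simp
  have "[2^j = 2^j0] (mod k)" using j(2) j0(2) by (metis cong_sym cong_trans)
  hence "j mod t = j0" using exp_cong[OF ok] j0(1) unfolding t_def by blast
  hence j0k: "j0 \<le> k - 1" using j(1) by (metis mod_le_divisor le_trans mod_less_eq_dividend)
  define s where "s = (k-1-j0) div t"
  define j1 where "j1 = j0 + s * t"
  have st: "s * t \<le> k-1-j0" unfolding s_def by (simp add: div_times_less_eq_dividend)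
  have st2: "k-1-j0 < (s+1) * t"
  proof -
    have "k-1-j0 = s*t + (k-1-j0) mod t" unfolding s_def by simp
    moreover have "(k-1-j0) mod t < t" using t0 by simp
    ultimately show ?thesis by simp
  qed
  have j1k: "j1 \<le> k - 1" unfolding j1_def using st j0k by simp
  have "j1 mod t = j0 mod t" unfolding j1_def by simp
  hence c1: "[2^j1 = 2^j0] (mod k)" using exp_cong'[OF ok] unfolding t_def by blast
  hence c2: "[2^j1 = 2^(k+1)-1] (mod k)" using j0(2) by (metis cong_sym cong_trans)
  define N :: nat where "N = 2^(k+1)-1-2^j1"
  have pj1: "2^j1 < (2::nat)^k" using j1k k1 by (intro power_strict_increasing) auto
  have pk: "(2::nat)^(k+1) = 2 * 2^k" by simp
  have Nsum: "N + 2^j1 = 2^(k+1)-1" unfolding N_def using pj1 pk by linarith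
  have Npos: "N > 0" unfolding N_def using pj1 pk by linarith
  have Ndvd: "k dvd N" using cong_sub_lemma2[OF Nsum c2] .
  have Nbs: "bitsum N = k"
  proof -
    have "2^j1 < (2::nat)^(k+1)" using pj1 pk by linarith
    from bitsum_compl[OF this] show ?thesis unfolding N_def by (simp add: bitsum_pow2)
  qed
  have Nmin: "N \<le> n" if n: "n > 0" "k dvd n" "bitsum n = k" for n
  proof (rule ccontr)
    assume "\<not> N \<le> n"
    hence nN: "n < N" by simp
    hence n2: "n < 2^(k+1)" unfolding N_def by simp
    from bitsum_compl[OF n2] n(3) have "bitsum (2^(k+1)-1-n) = 1" by simp
    then obtain i where i: "2^(k+1)-1-n = 2^i" using bitsum_1 by blast
    have nsum: "n + 2^i = 2^(k+1)-1" using i n2 by linarith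
    have "2^j1 < (2::nat)^i" using nsum Nsum nN by linarith
    hence ij1: "j1 < i" using power_less_imp_less_exp by (metis one_less_numeral_iff semiring_norm(76))
    have "(2::nat)^(k+1) > 0" by simp
    hence "2^i < (2::nat)^(k+1)" using nsum by linarith
    hence ik: "i < k + 1" using power_less_imp_less_exp by (metis one_less_numeral_iff semiring_norm(76))
    show False
    proof (cases "i = k")
      case True
      hence "n = 2^k - 1" using nsum pk by simp
      thus False using not_dvd_pow[OF k1] n(2) by simp
    next
      case False
      hence ik1: "i \<le> k - 1" using ik by simp
      have "[2^i = 2^(k+1)-1] (mod k)" using cong_sub_lemma[OF nsum n(2)] .
      hence "[2^i = 2^j0] (mod k)" using j0(2) by (metis cong_trans)
      hence imod: "i mod t = j0" using exp_cong[OF ok] j0(1) unfolding t_def by blast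
      have "j0 \<le> i" using ij1 unfolding j1_def by simp
      hence "t dvd i - j0" using imod by (metis mod_mod_trivial mod_eq_dvd_iff_nat mod_less_eq_dividend mod_mod_trivial)
      then obtain c where c: "i - j0 = t * c" by blast
      have "s * t < i - j0" using ij1 unfolding j1_def by linarith
      hence "s * t < c * t" using c by (simp add: mult.commute)
      hence "s < c" by simp
      hence "s + 1 \<le> c" by simp
      hence "(s+1) * t \<le> c * t" by (rule mult_right_mono) simp
      hence "k - 1 - j0 < i - j0" using st2 c by (simp add: mult.commute)
      thus False using ik1 by simp
    qed
  qed
  have "a_seq k = N" unfolding a_seq_def
    by (rule Least_equality) (use Npos Ndvd Nbs Nmin in auto)
  thus ?thesis unfolding N_def j1_def s_def t_def using j1k unfolding j1_def s_def t_def by simp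
qed


lemma j0_exists:
  assumes k1: "k > 1" and kC: "k \<in> C_set 1"
  shows "\<exists>j0. j0 < ord k 2 \<and> [2^(k+1) - 1 = 2^j0] (mod k)"
proof -
  obtain j where ok: "odd k" and j: "j \<le> k-1" "[2^(k+1)-1 = 2^j] (mod k)" using C1_elem[OF k1 kC] by blast
  have t0: "ord k 2 > 0" using odd_coprime2[OF ok] by simp
  have "[2^j = 2^(j mod ord k 2)] (mod k)" using exp_cong'[OF ok] by simp
  hence "[2^(k+1)-1 = 2^(j mod ord k 2)] (mod k)" using j(2) by (metis cong_trans)
  moreover have "j mod ord k 2 < ord k 2" using t0 by simp
  ultimately show ?thesis by blast
qed

lemma bounds:
  assumes k1: "k > 1" and kC: "k \<in> C_set 1"
  shows "2^k - 1 < a_seq k \<and> a_seq k < 2^(k+1) - 1"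
proof -
  obtain j0 where j0: "j0 < ord k 2" "[2^(k+1) - 1 = 2^j0] (mod k)" using j0_exists[OF k1 kC] by blast
  define j1 where "j1 = j0 + ((k-1-j0) div ord k 2) * ord k 2"
  have a: "a_seq k = 2^(k+1)-1-2^j1" and j1: "j1 \<le> k-1"
    using main_formula[OF k1 kC j0] unfolding j1_def by auto
  have "2^j1 \<le> (2::nat)^(k-1)" using j1 by (intro power_increasing) auto
  moreover have "(2::nat)^k = 2 * 2^(k-1)" using k1 by (metis Suc_diff_1 less_trans zero_less_one power_Suc)
  moreover have "(2::nat)^(k+1) = 2 * 2^k" by simp
  moreover have "(2::nat)^j1 \<ge> 1" by simp
  moreover have "(2::nat)^(k-1) \<ge> 1" by simp
  ultimately show ?thesis unfolding a by linarith
qed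

theorem mainTheorem5:
  fixes k :: nat
  assumes "k > 1" and "k \<in> C_set 1"
  shows "2^k - 1 < a_seq k \<and> a_seq k < 2^(k+1) - 1
    \<and> ((\<lambda>n. c_seq n / 2^n) \<longlongrightarrow> 0) (inf at_top (principal (C_set 1)))
    \<and> (\<exists>!j0. j0 < ord k 2 \<and> [2^(k+1) - 1 = 2^j0] (mod k))
    \<and> (\<forall>j0. j0 < ord k 2 \<and> [2^(k+1) - 1 = 2^j0] (mod k) \<longrightarrow>
         (let t = ord k 2; s = (k - 1 - j0) div t; j1 = j0 + s * t
          in a_seq k = 2^(k+1) - 1 - 2^j1))"
proof (intro conjI)
  show "2^k - 1 < a_seq k" "a_seq k < 2^(k+1) - 1" using bounds[OF assms] by auto
next
  show "\<forall>j0. j0 < ord k 2 \<and> [2^(k+1) - 1 = 2^j0] (mod k) \<longrightarrow>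
         (let t = ord k 2; s = (k - 1 - j0) div t; j1 = j0 + s * t
          in a_seq k = 2^(k+1) - 1 - 2^j1)"
    using main_formula[OF assms] by (simp add: Let_def)
next
  show "\<exists>!j0. j0 < ord k 2 \<and> [2^(k+1) - 1 = 2^j0] (mod k)"
  proof (rule ex_ex1I)
    show "\<exists>j0. j0 < ord k 2 \<and> [2^(k+1) - 1 = 2^j0] (mod k)" by (rule j0_exists[OF assms])
  next
    fix x y assume x: "x < ord k 2 \<and> [2^(k+1) - 1 = 2^x] (mod k)"
      and y: "y < ord k 2 \<and> [2^(k+1) - 1 = 2^y] (mod k)"
    have ok: "odd k" using C1_elem[OF assms] by blast
    have "[2^x = 2^y] (mod k)" using x y by (metis cong_sym cong_trans)
    hence "x mod ord k 2 = y" using exp_cong[OF ok] y by blast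
    thus "x = y" using x by simp
  qed
next
  have ev: "eventually (\<lambda>n. norm (c_seq n / 2^n) \<le> 2 / real n) (inf at_top (principal (C_set 1)))"
    unfolding eventually_inf_principal
  proof (rule eventually_mono[OF eventually_ge_at_top[of 2]])
    fix n :: nat assume n2: "2 \<le> n"
    show "n \<in> C_set 1 \<longrightarrow> norm (c_seq n / 2^n) \<le> 2 / real n"
    proof
      assume "n \<in> C_set 1"
      hence "a_seq n < 2^(n+1) - 1" using bounds n2 by auto
      moreover have "(2::nat)^(n+1) = 2 * 2^n" by simp
      ultimately have "a_seq n \<le> 2 * 2^n" by linarith
      hence "real (a_seq n) \<le> real (2 * 2^n)" by (rule of_nat_mono)
      hence "real (a_seq n) \<le> 2 * 2^n" by simp
      hence "real (a_seq n) / (real n * 2^n) \<le> 2 * 2^n / (real n * 2^n)"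
        using n2 by (intro divide_right_mono) auto
      also have "\<dots> = 2 / real n" by simp
      finally show "norm (c_seq n / 2^n) \<le> 2 / real n" unfolding c_seq_def by simp
    qed
  qed
  have "((\<lambda>n. 2 / real n) \<longlongrightarrow> 0) (inf at_top (principal (C_set 1)))"
    by (rule tendsto_mono[OF inf_le1]) (rule lim_const_over_n)
  thus "((\<lambda>n. c_seq n / 2^n) \<longlongrightarrow> 0) (inf at_top (principal (C_set 1)))"
    using Lim_null_comparison[OF ev] by blast
qed

end
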